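(* Let $Q$ be a quantity space over a field $K$. Then $Q/{\sim}$, with multiplication $[x][y]=[xy]$ and identity $[1_Q]$, is an abelian group.
   Context: A scalable monoid over a (unital, associative) ring $R$ is a monoid $X$ (identity $1_X$, product written $xy$) together with a map $R\times X\to X$, $(\alpha,x)\mapsto\alpha\cdot x$, such that $1\cdot x=x$, $\alpha\cdot(\beta\cdot x)=\alpha\beta\cdot x$ and $\alpha\cdot(xy)=(\alpha\cdot x)y=x(\alpha\cdot y)$ for all $\alpha,\beta\in R$, $x,y\in X$. A quantity space over a field $K$ is a commutative scalable monoid $Q$ over $K$ for which there exists a finite set $\{e_1,\ldots,e_n\}$ of invertible elements of $Q$ (a basis) such that every $x\in Q$ has a unique expansion $x=\mu\cdot\prod_{i=1}^n e_i^{k_i}$ with $\mu\in K$ and $k_1,\ldots,k_n\in\mathbb{Z}$. On $Q$, $x\sim y$ means $\alpha\cdot x=\beta\cdot y$ for some $\alpha,\beta\in K$; this is an equivalence relation compatible with multiplication, $[x]$ denotes the class of $x$, and $Q/{\sim}$ is the set of classes. *)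

theory Defs
  imports "HOL-Algebra.Group"
begin

definition scalable_monoid ::
  "('q \<Rightarrow> 'q \<Rightarrow> 'q) \<Rightarrow> 'q \<Rightarrow> ('k::ring_1 \<Rightarrow> 'q \<Rightarrow> 'q) \<Rightarrow> bool" where
  "scalable_monoid mul e sc \<longleftrightarrow>
     (\<forall>x y z. mul (mul x y) z = mul x (mul y z)) \<and>
     (\<forall>x. mul e x = x \<and> mul x e = x) \<and>
     (\<forall>x. sc 1 x = x) \<and>
     (\<forall>a b x. sc a (sc b x) = sc (a * b) x) \<and>
     (\<forall>a x y. sc a (mul x y) = mul (sc a x) y \<and> sc a (mul x y) = mul x (sc a y))"

definition m_invertible :: "('q \<Rightarrow> 'q \<Rightarrow> 'q) \<Rightarrow> 'q \<Rightarrow> 'q \<Rightarrow> bool" where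
  "m_invertible mul e x \<longleftrightarrow> (\<exists>y. mul x y = e \<and> mul y x = e)"

definition m_inv :: "('q \<Rightarrow> 'q \<Rightarrow> 'q) \<Rightarrow> 'q \<Rightarrow> 'q \<Rightarrow> 'q" where
  "m_inv mul e x = (THE y. mul x y = e \<and> mul y x = e)"

definition m_zpow :: "('q \<Rightarrow> 'q \<Rightarrow> 'q) \<Rightarrow> 'q \<Rightarrow> 'q \<Rightarrow> int \<Rightarrow> 'q" where
  "m_zpow mul e x k =
     (if 0 \<le> k then (mul x ^^ nat k) e else (mul (m_inv mul e x) ^^ nat (- k)) e)"

definition basis_prod :: "('q \<Rightarrow> 'q \<Rightarrow> 'q) \<Rightarrow> 'q \<Rightarrow> 'q list \<Rightarrow> int list \<Rightarrow> 'q" where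
  "basis_prod mul e es ks = foldr (\<lambda>(b, k) acc. mul (m_zpow mul e b k) acc) (zip es ks) e"

text \<open>A quantity space over a field: commutative scalable monoid with a finite
basis {e_1,...,e_n} (given as a distinct list) of invertible elements such that every
element has a unique expansion \<mu> \<cdot> \<Prod> e_i^(k_i).\<close>
definition quantity_space ::
  "('q \<Rightarrow> 'q \<Rightarrow> 'q) \<Rightarrow> 'q \<Rightarrow> ('k::field \<Rightarrow> 'q \<Rightarrow> 'q) \<Rightarrow> bool" where
  "quantity_space mul e sc \<longleftrightarrow>
     scalable_monoid mul e sc \<and>
     (\<forall>x y. mul x y = mul y x) \<and>
     (\<exists>es. distinct es \<and> (\<forall>b\<in>set es. m_invertible mul e b) \<and>
        (\<forall>x. \<exists>!p. length (snd p) = length es \<and>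
                   x = sc (fst p) (basis_prod mul e es (snd p))))"

definition sim_rel :: "('k \<Rightarrow> 'q \<Rightarrow> 'q) \<Rightarrow> ('q \<times> 'q) set" where
  "sim_rel sc = {(x, y). \<exists>a b. sc a x = sc b y}"

definition quot_group ::
  "('q \<Rightarrow> 'q \<Rightarrow> 'q) \<Rightarrow> 'q \<Rightarrow> ('k \<Rightarrow> 'q \<Rightarrow> 'q) \<Rightarrow> 'q set monoid" where
  "quot_group mul e sc =
     \<lparr> carrier = UNIV // sim_rel sc,
       mult = (\<lambda>A B. \<Union>x\<in>A. \<Union>y\<in>B. sim_rel sc `` {mul x y}),
       one = sim_rel sc `` {e} \<rparr>"

end

theory Submission
  imports Defs
begin

lemma inv_mul:
  assumes A: "\<forall>x y z. mul (mul x y) z = mul x (mul y z)"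
    and U: "\<forall>x. mul e x = x \<and> mul x e = x"
    and a: "m_invertible mul e a" and b: "m_invertible mul e b"
  shows "m_invertible mul e (mul a b)"
proof -
  obtain a' where a': "mul a a' = e" "mul a' a = e" using a unfolding m_invertible_def by blast
  obtain b' where b': "mul b b' = e" "mul b' b = e" using b unfolding m_invertible_def by blast
  have "mul (mul a b) (mul b' a') = mul a (mul (mul b b') a')" using A by simp
  also have "\<dots> = e" using U a'(1) b'(1) by simp
  finally have "mul (mul a b) (mul b' a') = e" .
  moreover have "mul (mul b' a') (mul a b) = mul b' (mul (mul a' a) b)" using A by simp
  moreover have "mul b' (mul (mul a' a) b) = e" using U a'(2) b'(2) by simp
  ultimately show ?thesis by (auto simp: m_invertible_def)
qed

lemma inv_pow:
  assumes A: "\<forall>x y z. mul (mul x y) z = mul x (mul y z)"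
    and U: "\<forall>x. mul e x = x \<and> mul x e = x"
    and a: "m_invertible mul e a"
  shows "m_invertible mul e ((mul a ^^ n) e)"
proof (induction n)
  case 0
  then show ?case using U unfolding m_invertible_def by auto
next
  case (Suc n)
  then show ?case using inv_mul[OF A U a Suc] by simp
qed

lemma inv_inv:
  assumes A: "\<forall>x y z. mul (mul x y) z = mul x (mul y z)"
    and U: "\<forall>x. mul e x = x \<and> mul x e = x"
    and a: "m_invertible mul e a"
  shows "m_invertible mul e (m_inv mul e a)"
proof -
  obtain a' where a': "mul a a' = e" "mul a' a = e" using a unfolding m_invertible_def by blast
  have uq: "y = a'" if "mul a y = e \<and> mul y a = e" for y
  proof -
    have "y = mul (mul a' a) y" using a'(2) U by simp
    also have "\<dots> = mul a' (mul a y)" using A by simp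
    also have "\<dots> = a'" using that U by simp
    finally show ?thesis .
  qed
  have "m_inv mul e a = a'" unfolding m_inv_def
    using a' uq by (intro the_equality) blast+
  then show ?thesis using a' unfolding m_invertible_def by auto
qed

lemma inv_zpow:
  assumes A: "\<forall>x y z. mul (mul x y) z = mul x (mul y z)"
    and U: "\<forall>x. mul e x = x \<and> mul x e = x"
    and a: "m_invertible mul e a"
  shows "m_invertible mul e (m_zpow mul e a k)"
  unfolding m_zpow_def using inv_pow[OF A U a] inv_pow[OF A U inv_inv[OF A U a]] by auto

lemma inv_bp:
  assumes A: "\<forall>x y z. mul (mul x y) z = mul x (mul y z)"
    and U: "\<forall>x. mul e x = x \<and> mul x e = x"
    and a: "\<forall>b\<in>set es. m_invertible mul e b"
  shows "m_invertible mul e (basis_prod mul e es ks)"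
  using a
proof (induction es arbitrary: ks)
  case Nil
  then show ?case using U unfolding m_invertible_def basis_prod_def by auto
next
  case (Cons b es)
  show ?case
  proof (cases ks)
    case Nil
    then show ?thesis using U unfolding m_invertible_def basis_prod_def by auto
  next
    case (Cons k ks')
    have "basis_prod mul e (b # es) ks = mul (m_zpow mul e b k) (basis_prod mul e es ks')"
      unfolding basis_prod_def Cons by simp
    moreover have i1: "m_invertible mul e (basis_prod mul e es ks')" using Cons.IH Cons.prems by simp
    moreover have i2: "m_invertible mul e (m_zpow mul e b k)" using inv_zpow[OF A U] Cons.prems by simp
    ultimately show ?thesis using inv_mul[OF A U i2 i1] by simp
  qed
qed

theorem proposition3p18:
  fixes mul :: "'q \<Rightarrow> 'q \<Rightarrow> 'q" and e :: 'q and sc :: "'k::field \<Rightarrow> 'q \<Rightarrow> 'q"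
  assumes "quantity_space mul e sc"
  shows "comm_group (quot_group mul e sc)"
proof -
  have SM: "scalable_monoid mul e sc" and C: "\<forall>x y. mul x y = mul y x"
    and B: "\<exists>es. distinct es \<and> (\<forall>b\<in>set es. m_invertible mul e b) \<and>
        (\<forall>x. \<exists>!p. length (snd p) = length es \<and>
                   x = sc (fst p) (basis_prod mul e es (snd p)))"
    using assms unfolding quantity_space_def by auto
  have A: "\<forall>x y z. mul (mul x y) z = mul x (mul y z)"
    and U: "\<forall>x. mul e x = x \<and> mul x e = x"
    and S1: "\<forall>x. sc 1 x = x"
    and S2: "\<forall>a b x. sc a (sc b x) = sc (a * b) x"
    and S3: "\<forall>a x y. sc a (mul x y) = mul (sc a x) y \<and> sc a (mul x y) = mul x (sc a y)"
    using SM unfolding scalable_monoid_def by blast+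
  define f where "f = sc 0"
  define R where "R = sim_rel sc"
  have R: "R = {(x, y). f x = f y}"
  proof -
    have "(\<exists>a b. sc a x = sc b y) \<longleftrightarrow> f x = f y" for x y
    proof
      assume "\<exists>a b. sc a x = sc b y"
      then obtain a b where "sc a x = sc b y" by blast
      then have "sc 0 (sc a x) = sc 0 (sc b y)" by simp
      then show "f x = f y" unfolding f_def using S2 by simp
    next
      assume "f x = f y" then show "\<exists>a b. sc a x = sc b y" unfolding f_def by blast
    qed
    then show ?thesis unfolding R_def sim_rel_def by auto
  qed
  have fmul: "f (mul x y) = mul (f x) (f y)" for x y
  proof -
    have "f (mul x y) = sc 0 (sc 0 (mul x y))" unfolding f_def using S2 by simp
    also have "\<dots> = mul (f x) (f y)" unfolding f_def using S3 by metis
    finally show ?thesis .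
  qed
  define cl where "cl x = {y. f y = f x}" for x
  have Rcl: "R `` {x} = cl x" for x unfolding R cl_def by auto
  have carr: "A \<in> UNIV // R \<longleftrightarrow> (\<exists>x. A = cl x)" for A
    unfolding quotient_def Rcl by auto
  have cleq: "cl x = cl y \<longleftrightarrow> f x = f y" for x y unfolding cl_def by auto
  have mult: "mult (quot_group mul e sc) (cl x) (cl y) = cl (mul x y)" for x y
  proof -
    have "(\<Union>x'\<in>cl x. \<Union>y'\<in>cl y. cl (mul x' y')) = cl (mul x y)"
    proof -
      have "\<And>x' y'. x' \<in> cl x \<Longrightarrow> y' \<in> cl y \<Longrightarrow> cl (mul x' y') = cl (mul x y)"
        unfolding cleq by (simp add: fmul cl_def)
      moreover have "x \<in> cl x" "y \<in> cl y" unfolding cl_def by auto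
      ultimately show ?thesis by blast
    qed
    then show ?thesis unfolding quot_group_def R_def[symmetric] Rcl by simp
  qed
  have one: "one (quot_group mul e sc) = cl e"
    unfolding quot_group_def R_def[symmetric] Rcl by simp
  have car: "carrier (quot_group mul e sc) = UNIV // R"
    unfolding quot_group_def R_def by simp
  obtain es where es: "\<forall>b\<in>set es. m_invertible mul e b"
    and ex: "\<forall>x. \<exists>p. x = sc (fst p) (basis_prod mul e es (snd p))"
    using B by metis
  have invex: "\<exists>y. f (mul y x) = f e" for x
  proof -
    obtain p where p: "x = sc (fst p) (basis_prod mul e es (snd p))" using ex by blast
    let ?b = "basis_prod mul e es (snd p)"
    have "f x = f ?b" unfolding f_def p using S2 by simp
    obtain z where z: "mul z ?b = e" using inv_bp[OF A U es, of "snd p"] unfolding m_invertible_def by blast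
    have "f (mul z x) = mul (f z) (f x)" by (rule fmul)
    also have "\<dots> = mul (f z) (f ?b)" using \<open>f x = f ?b\<close> by simp
    also have "\<dots> = f e" using fmul z by metis
    finally show ?thesis by blast
  qed
  let ?G = "quot_group mul e sc"
  have cG: "a \<in> carrier ?G \<longleftrightarrow> (\<exists>x. a = cl x)" for a using car carr by simp
  show ?thesis
  proof (rule comm_groupI)
    fix a b assume "a \<in> carrier ?G" "b \<in> carrier ?G"
    then show "a \<otimes>\<^bsub>?G\<^esub> b \<in> carrier ?G" unfolding cG using mult by auto
  next
    show "\<one>\<^bsub>?G\<^esub> \<in> carrier ?G" unfolding cG one by blast
  next
    fix a b c assume "a \<in> carrier ?G" "b \<in> carrier ?G" "c \<in> carrier ?G"
    then show "a \<otimes>\<^bsub>?G\<^esub> b \<otimes>\<^bsub>?G\<^esub> c = a \<otimes>\<^bsub>?G\<^esub> (b \<otimes>\<^bsub>?G\<^esub> c)"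
      unfolding cG using mult A by auto
  next
    fix a b assume "a \<in> carrier ?G" "b \<in> carrier ?G"
    then show "a \<otimes>\<^bsub>?G\<^esub> b = b \<otimes>\<^bsub>?G\<^esub> a" unfolding cG using mult C by auto
  next
    fix a assume "a \<in> carrier ?G"
    then show "\<one>\<^bsub>?G\<^esub> \<otimes>\<^bsub>?G\<^esub> a = a" unfolding cG one using mult U by auto
  next
    fix a assume "a \<in> carrier ?G"
    then obtain x where x: "a = cl x" unfolding cG by blast
    obtain y where "f (mul y x) = f e" using invex by blast
    then have "cl y \<otimes>\<^bsub>?G\<^esub> a = \<one>\<^bsub>?G\<^esub>" using x mult cleq one by simp
    moreover have "cl y \<in> carrier ?G" unfolding cG by blast
    ultimately show "\<exists>b\<in>carrier ?G. b \<otimes>\<^bsub>?G\<^esub> a = \<one>\<^bsub>?G\<^esub>" by blast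
  qed
qed

end
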